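(* Let $p$ be a prime, $1\le e<p$, and define $f_n\in\mathbb{F}_p[c]$ by $f_1=c$ and $f_{n+1}=c^{p^n}-f_n^e$ for $n\ge1$. Let $\mathfrak{p}\subseteq\mathbb{F}_p[c]$ be a nonzero prime ideal and suppose $r\ge1$ is the least integer with $f_r\in\mathfrak{p}$. Then for all $n\ge1$, \[v_{\mathfrak{p}}(f_n)=\begin{cases}e^{k-1}v_{\mathfrak{p}}(f_r)&\text{if }n=rk,\\0&\text{if }r\nmid n,\end{cases}\] where $v_{\mathfrak{p}}$ is the $\mathfrak{p}$-adic valuation. *)

theory Defs
  imports "HOL-Computational_Algebra.Computational_Algebra"
begin

text \<open>The sequence f_1 = c, f_(n+1) = c^(p^n) - f_n^e in K[c]; index 0 is unused (set to 0).\<close>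
fun fseq :: "nat \<Rightarrow> nat \<Rightarrow> nat \<Rightarrow> 'a::field poly" where
  "fseq p e 0 = 0"
| "fseq p e (Suc 0) = [:0, 1:]"
| "fseq p e (Suc (Suc n)) = [:0, 1:] ^ (p ^ Suc n) - (fseq p e (Suc n)) ^ e"

end

theory Submission imports Defs "HOL-Number_Theory.Number_Theory" begin

lemma binom_exp:
  fixes F d :: "'b::comm_ring_1"
  shows "\<exists>T. (F + d) ^ e = F ^ e + of_nat e * F ^ (e - 1) * d + d^2 * T"
proof (induction e)
  case 0 then show ?case by (intro exI[of _ 0]) simp
next
  case (Suc e)
  then obtain T where T: "(F + d) ^ e = F ^ e + of_nat e * F ^ (e - 1) * d + d^2 * T" by blast
  show ?case
  proof (cases e)
    case 0 then show ?thesis by (intro exI[of _ 0]) simp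
  next
    case (Suc m)
    have "(F + d) ^ Suc e = (F + d) * (F ^ e + of_nat e * F ^ (e - 1) * d + d^2 * T)"
      using T by simp
    also have "\<dots> = F ^ Suc e + of_nat (Suc e) * F ^ e * d + d^2 * (F * T + of_nat e * F^(e-1) + d * T)"
      using Suc by (simp add: algebra_simps power2_eq_square)
    finally show ?thesis by auto
  qed
qed

lemma val_sum:
  fixes q x y :: "'b::factorial_ring_gcd"
  assumes "x \<noteq> 0" "y = 0 \<or> multiplicity q x < multiplicity q y"
  shows "multiplicity q (x + y) = multiplicity q x"
proof (cases "y = 0")
  case True then show ?thesis by simp
next
  case False
  then have lt: "multiplicity q x < multiplicity q y" using assms by auto
  then have nu: "\<not> is_unit q" using multiplicity_unit_left by (metis less_nat_zero_code)
  have d1: "q ^ multiplicity q x dvd x" by (rule multiplicity_dvd)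
  have d2: "q ^ Suc (multiplicity q x) dvd y" using lt by (intro multiplicity_dvd') simp
  have d3: "\<not> q ^ Suc (multiplicity q x) dvd x"
    using power_dvd_iff_le_multiplicity[OF assms(1) nu, of "Suc (multiplicity q x)"] by linarith
  have "q ^ multiplicity q x dvd y" using d2 by (metis dvd_mult_left power_Suc2)
  then have "q ^ multiplicity q x dvd x + y" using d1 by simp
  moreover have "\<not> q ^ Suc (multiplicity q x) dvd x + y" using d3 dvd_add_left_iff[OF d2, of x] by simp
  ultimately show ?thesis by (rule multiplicity_eqI)
qed

lemma val_binom:
  fixes q F d :: "'b::factorial_ring_gcd"
  assumes "prime q" "\<not> q dvd F" "d \<noteq> 0" "q dvd d" "\<not> q dvd of_nat e" "e \<ge> 1"
  shows "multiplicity q ((F + d) ^ e - F ^ e) = multiplicity q d"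
proof -
  obtain T where T: "(F + d) ^ e = F ^ e + of_nat e * F ^ (e - 1) * d + d^2 * T"
    using binom_exp by blast
  have eq: "(F + d) ^ e - F ^ e = of_nat e * F ^ (e - 1) * d + d^2 * T" using T by simp
  have ndvd: "\<not> q dvd of_nat e * F ^ (e - 1)"
    using assms by (metis prime_dvd_mult_iff prime_dvd_power)
  have nz: "of_nat e * F ^ (e - 1) \<noteq> 0" using ndvd dvd_0_right by metis
  have m1: "multiplicity q (of_nat e * F ^ (e - 1) * d) = multiplicity q d"
    using assms ndvd nz prime_elem_multiplicity_mult_distrib[of q "of_nat e * F ^ (e - 1)" d]
    by (simp add: not_dvd_imp_multiplicity_0)
  have mpos: "multiplicity q d > 0" using assms multiplicity_gt_zero_iff by blast
  have lt: "d^2 * T = 0 \<or> multiplicity q (of_nat e * F ^ (e - 1) * d) < multiplicity q (d^2 * T)"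
  proof (cases "T = 0")
    case False
    have "multiplicity q (d^2 * T) = 2 * multiplicity q d + multiplicity q T"
      using assms False prime_elem_multiplicity_mult_distrib[of q "d^2" T]
        prime_elem_multiplicity_power_distrib[of q d 2] by simp
    then show ?thesis using m1 mpos by simp
  qed simp
  show ?thesis using val_sum[OF _ lt] eq m1 nz assms(3) by (metis mult_eq_0_iff)
qed


lemma divA: "(r::nat) \<ge> 1 \<Longrightarrow> (r - 1 + r * a) div r = a"
  by (metis One_nat_def Suc_le_lessD add.commute diff_less div_less div_mult_self2 less_one linorder_not_le not_one_le_zero add_0)
lemma divB: "(r::nat) \<ge> 1 \<Longrightarrow> \<not> r dvd j \<Longrightarrow> (Suc j + r - 1) div r = (j + r - 1) div r"
proof -
  assume r: "r \<ge> 1" and nd: "\<not> r dvd j"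
  define a b where "a = j div r" and "b = j mod r"
  have j: "j = b + r * a" unfolding a_def b_def by simp
  have b0: "b > 0" using nd b_def by (simp add: dvd_eq_mod_eq_0)
  have br: "b < r" using r b_def by simp
  have e1: "Suc j + r - 1 = b + r * (Suc a)" using j by simp
  have e2: "j + r - 1 = (b - 1) + r * (Suc a)" using j b0 by simp
  show ?thesis unfolding e1 e2 using br b0
    by (metis add.commute div_less div_mult_self2 less_imp_diff_less not_less0 add_0 r not_one_le_zero)
qed

locale fsetup =
  fixes p e r :: nat and q :: "'a::{field_gcd,finite} poly"
  assumes pp: "prime p" and card: "card (UNIV :: 'a set) = p"
    and e1: "1 \<le> e" and ep: "e < p"
    and qp: "prime q"
    and r1: "1 \<le> r" and qr: "q dvd fseq p e r"
    and qm: "\<forall>m. 1 \<le> m \<and> m < r \<longrightarrow> \<not> q dvd fseq p e m"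
begin

abbreviation f :: "nat \<Rightarrow> 'a poly" where "f n \<equiv> fseq p e n"

lemma CHAR_eq: "CHAR('a) = p"
proof -
  have "CHAR('a) > 0" by (rule finite_imp_CHAR_pos) simp
  then have "prime CHAR('a)" by (rule prime_CHAR_semidom)
  moreover have "CHAR('a) dvd p" using CHAR_dvd_CARD[where ?'a='a] card by simp
  ultimately show ?thesis using pp by (simp add: primes_dvd_imp_eq)
qed

lemma frob: "((x::'a poly) - y) ^ (p ^ n) = x ^ (p ^ n) - y ^ (p ^ n)"
proof -
  have "((x - y) + y) ^ (p ^ n) = (x - y) ^ (p ^ n) + y ^ (p ^ n)"
    by (rule freshmans_dream') (simp_all add: CHAR_eq pp)
  then show ?thesis by (simp add: algebra_simps)
qed

lemma e_nz: "\<not> q dvd of_nat e"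
proof -
  have "of_nat e \<noteq> (0::'a poly)"
    using e1 ep of_nat_eq_0_iff_char_dvd[where ?'a="'a poly"] CHAR_eq
    by (simp add: nat_dvd_not_less)
  then have "is_unit (of_nat e :: 'a poly)"
    by (metis is_unit_const_poly_iff of_nat_poly dvd_field_iff of_nat_eq_0_iff_char_dvd semiring_char_poly)
  then show ?thesis using qp by (meson dvd_unit_imp_unit not_prime_unit)
qed

lemma f_suc: "n \<ge> 1 \<Longrightarrow> f (Suc n) = [:0,1:] ^ (p ^ n) - f n ^ e"
  by (cases n) auto

lemma deg_f: "n \<ge> 1 \<Longrightarrow> degree (f n) = p ^ (n - 1)"
proof (induction n rule: nat_induct_at_least)
  case base then show ?case by simp
next
  case (Suc n)
  have "f n \<noteq> 0" using Suc by (metis degree_0 power_not_zero pp prime_gt_0_nat not_gr0)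
  then have d: "degree (f n ^ e) = e * p ^ (n - 1)" using Suc by (simp add: degree_power_eq)
  have "e * p ^ (n - 1) < p * p ^ (n - 1)" using ep pp by (simp add: prime_gt_0_nat)
  also have "p * p ^ (n - 1) = p ^ n" using Suc by (metis Suc_diff_le diff_Suc_1 power_Suc)
  finally have lt: "degree (- (f n ^ e)) < degree ([:0,1:] ^ (p ^ n) :: 'a poly)"
    using d by (simp add: degree_linear_power)
  have "f (Suc n) = [:0,1:] ^ (p ^ n) + - (f n ^ e)" using f_suc Suc by simp
  then show ?case using degree_add_eq_left[OF lt] by (simp add: degree_linear_power)
qed

lemma f_nz: "n \<ge> 1 \<Longrightarrow> f n \<noteq> 0"
  using deg_f pp
  by (metis Nat.diff_le_self One_nat_def degree_0 le_0_eq not_one_le_zero one_le_power prime_ge_1_nat)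


definition h :: "nat \<Rightarrow> 'a poly" where "h j = f (r + j) - f j ^ (p ^ r)"
definition vr :: nat where "vr = multiplicity q (f r)"
definition V :: "nat \<Rightarrow> nat" where "V n = (if r dvd n then e ^ (n div r - 1) * vr else 0)"
definition W :: "nat \<Rightarrow> nat" where "W j = e ^ ((j + r - 1) div r) * vr"

lemma h1: "h 1 = - (f r ^ e)"
  using f_suc[of r] r1 by (simp add: h_def)

lemma hsuc: assumes "j \<ge> 1" shows "h (Suc j) = (f j ^ (p ^ r)) ^ e - f (r + j) ^ e"
proof -
  have a: "f (r + Suc j) = [:0,1:] ^ (p ^ (r + j)) - f (r + j) ^ e"
    using f_suc[of "r + j"] assms by simp
  have "f (Suc j) ^ (p ^ r) = ([:0,1:] ^ (p ^ j)) ^ (p ^ r) - (f j ^ e) ^ (p ^ r)"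
    using f_suc[of j] assms frob by simp
  also have "\<dots> = [:0,1:] ^ (p ^ (r + j)) - (f j ^ (p ^ r)) ^ e"
    by (simp add: power_add mult.commute flip: power_mult)
  finally show ?thesis using a by (simp add: h_def)
qed

lemma vr_pos: "vr \<ge> 1"
  using qr multiplicity_gt_zero_iff[of "f r" q] f_nz[OF r1] qp unfolding vr_def
  by (simp add: not_prime_unit)

lemma W_pos: "W j \<ge> 1"
  using vr_pos e1 unfolding W_def by simp

lemma mult_pow: "n \<ge> 1 \<Longrightarrow> multiplicity q (f n ^ k) = k * multiplicity q (f n)"
  using f_nz qp by (simp add: prime_elem_multiplicity_power_distrib)

lemma stepI:
  assumes "n > r" and I: "multiplicity q (f (n - r)) = V (n - r)"
    and II: "multiplicity q (h (n - r)) = W (n - r)"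
  shows "multiplicity q (f n) = V n"
proof -
  define j where "j = n - r"
  have j1: "j \<ge> 1" using assms j_def by simp
  have fn: "f n = f j ^ (p ^ r) + h j" using assms by (simp add: h_def j_def)
  have hnz: "h j \<noteq> 0" using II W_pos j_def by (metis multiplicity_zero not_one_le_zero)
  have m1: "multiplicity q (f j ^ (p ^ r)) = p ^ r * V j" using mult_pow j1 I j_def by simp
  show ?thesis
  proof (cases "r dvd n")
    case False
    then have "\<not> r dvd j" using assms j_def
      by (metis dvd_add_triv_right_iff le_add_diff_inverse2 less_imp_le)
    then have "V j = 0" by (simp add: V_def)
    have "multiplicity q (f j ^ (p ^ r) + h j) = multiplicity q (f j ^ (p ^ r))"
      by (rule val_sum) (use f_nz[OF j1] m1 \<open>V j = 0\<close> II j_def W_pos[of j] in auto)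
    then show ?thesis using fn m1 \<open>V j = 0\<close> False by (simp add: V_def)
  next
    case True
    then obtain k where k: "n = r * k" by blast
    have "r * 1 < r * k" using assms k by simp
    then have k2: "k \<ge> 2" by (simp add: mult_less_cancel1)
    have jk: "j = r * (k - 1)" using k j_def by (simp add: right_diff_distrib')
    have Vj: "V j = e ^ (k - 2) * vr" using jk r1 k2 by (simp add: V_def numeral_2_eq_2)
    have "(j + r - 1) div r = k - 1"
    proof -
      have "j + r - 1 = (r - 1) + r * (k - 1)" using jk r1 by simp
      then show ?thesis using r1 divA by simp
    qed
    then have Wj: "W j = e ^ (k - 1) * vr" by (simp add: W_def)
    have Vn: "V n = e ^ (k - 1) * vr" using k r1 by (simp add: V_def)
    have "e ^ (k - 1) = e * e ^ (k - 2)" proof -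
      have "k - 1 = Suc (k - 2)" using k2 by simp
      then show ?thesis by simp
    qed
    moreover have "e < p ^ r"
    proof -
      have "p \<le> p ^ r" using r1 pp prime_ge_1_nat[OF pp] self_le_power[of p r] by simp
      then show ?thesis using ep by linarith
    qed
    ultimately have lt: "e ^ (k - 1) * vr < p ^ r * (e ^ (k - 2) * vr)"
      using vr_pos e1 by simp
    have "multiplicity q (h j + f j ^ (p ^ r)) = multiplicity q (h j)"
      by (rule val_sum[OF hnz]) (use lt m1 Vj II Wj j_def in simp)
    then show ?thesis using fn II Wj Vn j_def by (simp add: add.commute)
  qed
qed


lemma stepII:
  assumes j1: "j \<ge> 1" and I: "multiplicity q (f j) = V j"
    and II: "multiplicity q (h j) = W j"
    and I2: "multiplicity q (f (r + j)) = V (r + j)"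
  shows "multiplicity q (h (Suc j)) = W (Suc j)"
proof -
  define F where "F = f j ^ (p ^ r)"
  have frj: "f (r + j) = F + h j" by (simp add: h_def F_def)
  have hs: "h (Suc j) = F ^ e - f (r + j) ^ e" using hsuc[OF j1] by (simp add: F_def)
  have hnz: "h j \<noteq> 0" using II W_pos by (metis multiplicity_zero not_one_le_zero)
  have nu: "\<not> is_unit q" using qp by (simp add: not_prime_unit)
  show ?thesis
  proof (cases "r dvd j")
    case False
    then have "V j = 0" by (simp add: V_def)
    then have "\<not> q dvd f j" using I multiplicity_gt_zero_iff[OF f_nz[OF j1] nu] by simp
    then have nF: "\<not> q dvd F" using qp F_def by (metis prime_dvd_power)
    have qh: "q dvd h j" using II W_pos[of j] multiplicity_gt_zero_iff[OF hnz nu] by simp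
    have "multiplicity q ((F + h j) ^ e - F ^ e) = multiplicity q (h j)"
      by (rule val_binom[OF qp nF hnz qh e_nz e1])
    moreover have "h (Suc j) = - ((F + h j) ^ e - F ^ e)" using hs frj by simp
    moreover have "W (Suc j) = W j" using divB[OF r1 False] by (simp add: W_def)
    ultimately show ?thesis using II by (metis multiplicity_uminus_right)
  next
    case True
    then obtain k where k: "j = r * k" by blast
    have k1: "k \<ge> 1" using k j1 by (cases k) auto
    have Vj: "V j = e ^ (k - 1) * vr" using k r1 by (simp add: V_def)
    have rj: "r + j = r * Suc k" using k by simp
    have Vrj: "V (r + j) = e ^ k * vr" using rj r1 by (simp add: V_def)
    have mF: "multiplicity q (F ^ e) = e * (p ^ r * (e ^ (k - 1) * vr))"
    proof -
      have "F ^ e = f j ^ (p ^ r * e)" by (simp add: F_def power_mult)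
      then show ?thesis using mult_pow[OF j1, of "p ^ r * e"] I Vj by (simp add: ac_simps)
    qed
    have mfr: "multiplicity q (- (f (r + j) ^ e)) = e * (e ^ k * vr)"
      using mult_pow[of "r + j" e] I2 Vrj r1 by simp
    have ek: "e ^ k = e * e ^ (k - 1)" using k1 by (metis Suc_diff_le diff_Suc_1 power_Suc)
    have "e < p ^ r"
    proof -
      have "p \<le> p ^ r" using r1 pp prime_ge_1_nat[OF pp] self_le_power[of p r] by simp
      then show ?thesis using ep by linarith
    qed
    then have "e * (e ^ k * vr) < e * (p ^ r * (e ^ (k - 1) * vr))"
      using ek vr_pos e1 by simp
    then have "multiplicity q (- (f (r + j) ^ e) + F ^ e) = multiplicity q (- (f (r + j) ^ e))"
      using val_sum[of "- (f (r + j) ^ e)" "F ^ e" q] f_nz[of "r + j"] r1 mF mfr by simp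
    moreover have "h (Suc j) = - (f (r + j) ^ e) + F ^ e" using hs by simp
    moreover have "W (Suc j) = e ^ Suc k * vr"
    proof -
      have "Suc j + r - 1 = r * Suc k" using k r1 by simp
      then show ?thesis using r1 by (simp add: W_def)
    qed
    ultimately show ?thesis using mfr by simp
  qed
qed

lemma base_f: "1 \<le> m \<Longrightarrow> m \<le> r \<Longrightarrow> multiplicity q (f m) = V m"
proof -
  assume m: "1 \<le> m" "m \<le> r"
  show ?thesis
  proof (cases "m = r")
    case True then show ?thesis using r1 by (simp add: V_def vr_def)
  next
    case False
    then have "m < r" using m by simp
    then have "\<not> r dvd m" using m by (simp add: nat_dvd_not_less)
    moreover have "\<not> q dvd f m" using qm m \<open>m < r\<close> by blast
    ultimately show ?thesis by (simp add: V_def not_dvd_imp_multiplicity_0)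
  qed
qed

lemma all_vals: "j \<ge> 1 \<Longrightarrow> multiplicity q (h j) = W j \<and> (\<forall>m. 1 \<le> m \<and> m \<le> r + j \<longrightarrow> multiplicity q (f m) = V m)"
proof (induction j rule: nat_induct_at_least)
  case base
  have II1: "multiplicity q (h 1) = W 1"
    using h1 mult_pow[OF r1, of e] r1 by (simp add: W_def vr_def)
  have "multiplicity q (f (r + 1)) = V (r + 1)"
    using stepI[of "r + 1"] II1 base_f[of 1] r1 by simp
  then show ?case using II1 base_f by (metis le_Suc_eq Suc_eq_plus1)
next
  case (Suc j)
  have II: "multiplicity q (h (Suc j)) = W (Suc j)"
    using stepII[of j] Suc r1 by simp
  have "multiplicity q (f (r + Suc j)) = V (r + Suc j)"
    using stepI[of "r + Suc j"] II Suc r1 by simp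
  then show ?case using II Suc by (metis le_Suc_eq add_Suc_right)
qed

lemma f_vals: "m \<ge> 1 \<Longrightarrow> multiplicity q (f m) = V m"
  using all_vals[of m] by simp

end

theorem lemma5p3:
  fixes p e r :: nat and q :: "'a::{field_gcd,finite} poly"
  assumes "prime p" and "card (UNIV :: 'a set) = p"
    and "1 \<le> e" and "e < p"
    and "prime q"
    and "1 \<le> r" and "q dvd fseq p e r"
    and "\<forall>m. 1 \<le> m \<and> m < r \<longrightarrow> \<not> q dvd fseq p e m"
  shows "(\<forall>k\<ge>1. multiplicity q (fseq p e (r * k)) = e ^ (k - 1) * multiplicity q (fseq p e r))
       \<and> (\<forall>n\<ge>1. \<not> r dvd n \<longrightarrow> multiplicity q (fseq p e n) = 0)"
proof -
  interpret fsetup p e r q using assms by unfold_locales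
  show ?thesis
  proof (intro conjI allI impI)
    fix k :: nat assume k: "k \<ge> 1"
    then have "r * k \<ge> 1" using assms by simp
    then show "multiplicity q (fseq p e (r * k)) = e ^ (k - 1) * multiplicity q (fseq p e r)"
      using f_vals[of "r * k"] assms by (simp add: V_def vr_def)
  next
    fix n :: nat assume "n \<ge> 1" "\<not> r dvd n"
    then show "multiplicity q (fseq p e n) = 0" using f_vals[of n] by (simp add: V_def)
  qed
qed

end
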